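(* Let $N=\{1,\dots,n\}$, $n\ge 2$, be a parallel-link network with one unit of demand and affine latencies $\ell_i(x_i)=a_ix_i+b_i$ with $a_i>0$, $b_i\ge 0$ for all $i\in N$. Then for every price cap $c\in\mathbb{R}_+$ there exists a $c$-capped subgame perfect Nash equilibrium, i.e. $\mathcal{T}(c)\neq\emptyset$.
   Context: Model: a finite set $N=\{1,\dots,n\}$, $n\ge 2$, of parallel links connecting a common source to a common destination; one unit of flow must be sent. A flow is a vector $x\in\mathbb{R}^N_+$ with $\sum_{i\in N}x_i=1$. Each link $i$ has a latency function $\ell_i$. A toll vector is $t\in\mathbb{R}^N_+$; the effective cost of link $i$ is $\ell_i(x_i)+t_i$. A flow $x$ is a Wardrop equilibrium for $t$ if for all $i,j\in N$ with $x_i>0$, $\ell_i(x_i)+t_i\le \ell_j(x_j)+t_j$; under the assumptions used it exists and is unique, and is denoted $x(t)$. Firm $i$ owns link $i$ and has profit $\Pi_i(t_i,t_{-i})=t_i\cdot x_i(t)$. For $c\in\mathbb{R}_+$, a toll vector $t$ is a $c$-capped subgame perfect Nash equilibrium if $0\le t_i\le c$ for all $i$ and, for every $i\in N$ and every $t_i'\in[0,c]$, $\Pi_i(t_i,t_{-i})\ge \Pi_i(t_i',t_{-i})$ (where the flow is recomputed as the Wardrop equilibrium for $(t'_i,t_{-i})$). $\mathcal{T}(c)$ denotes the set of such equilibria. *)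

theory Defs
  imports Complex_Main
begin

definition is_flow :: "nat \<Rightarrow> (nat \<Rightarrow> real) \<Rightarrow> bool" where
  "is_flow n x \<longleftrightarrow> (\<forall>i\<in>{1..n}. 0 \<le> x i) \<and> (\<forall>i. i \<notin> {1..n} \<longrightarrow> x i = 0)
      \<and> (\<Sum>i\<in>{1..n}. x i) = 1"

definition wardrop :: "nat \<Rightarrow> (nat \<Rightarrow> real \<Rightarrow> real) \<Rightarrow> (nat \<Rightarrow> real) \<Rightarrow> (nat \<Rightarrow> real) \<Rightarrow> bool" where
  "wardrop n l t x \<longleftrightarrow> is_flow n x \<and>
     (\<forall>i\<in>{1..n}. \<forall>j\<in>{1..n}. 0 < x i \<longrightarrow> l i (x i) + t i \<le> l j (x j) + t j)"

definition eq_flow :: "nat \<Rightarrow> (nat \<Rightarrow> real \<Rightarrow> real) \<Rightarrow> (nat \<Rightarrow> real) \<Rightarrow> (nat \<Rightarrow> real)" where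
  "eq_flow n l t = (THE x. wardrop n l t x)"

definition profit :: "nat \<Rightarrow> (nat \<Rightarrow> real \<Rightarrow> real) \<Rightarrow> (nat \<Rightarrow> real) \<Rightarrow> nat \<Rightarrow> real" where
  "profit n l t i = t i * eq_flow n l t i"

definition capped_spne :: "nat \<Rightarrow> (nat \<Rightarrow> real \<Rightarrow> real) \<Rightarrow> real \<Rightarrow> (nat \<Rightarrow> real) \<Rightarrow> bool" where
  "capped_spne n l c t \<longleftrightarrow> (\<forall>i\<in>{1..n}. 0 \<le> t i \<and> t i \<le> c) \<and>
     (\<forall>i\<in>{1..n}. \<forall>t'\<in>{0..c}. profit n l t i \<ge> profit n l (t(i := t')) i)"

definition capped_spne_set :: "nat \<Rightarrow> (nat \<Rightarrow> real \<Rightarrow> real) \<Rightarrow> real \<Rightarrow> (nat \<Rightarrow> real) set" where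
  "capped_spne_set n l c = {t. capped_spne n l c t}"

end

theory Submission
  imports Defs
begin


lemma W1:
  assumes apos: "\<forall>i\<in>{1..n}. a i > 0"
    and sum1: "(\<Sum>i\<in>{1..n}. max 0 ((L - b i - t i)/a i)) = 1"
  shows "wardrop n (\<lambda>i y. a i * y + b i) t (\<lambda>i. if i\<in>{1..n} then max 0 ((L - b i - t i)/a i) else 0)"
proof -
  have cost: "a j * max 0 ((L - b j - t j)/a j) + b j + t j \<ge> L" if "j \<in> {1..n}" for j
  proof -
    have "a j > 0" using apos that by auto
    hence "a j * max 0 ((L - b j - t j)/a j) \<ge> a j * ((L - b j - t j)/a j)"
      by (intro mult_left_mono) auto
    also have "a j * ((L - b j - t j)/a j) = L - b j - t j" using \<open>a j > 0\<close> by simp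
    finally show ?thesis by simp
  qed
  have cost2: "a j * max 0 ((L - b j - t j)/a j) + b j + t j = L" if "j \<in> {1..n}" "0 < max 0 ((L - b j - t j)/a j)" for j
  proof -
    have "a j > 0" using apos that by auto
    have "max 0 ((L - b j - t j)/a j) = (L - b j - t j)/a j" using that(2) by linarith
    then show ?thesis using \<open>a j > 0\<close> by simp
  qed
  define x where "x = (\<lambda>i. if i\<in>{1..n} then max 0 ((L - b i - t i)/a i) else 0)"
  have isf: "is_flow n x" unfolding is_flow_def
  proof (intro conjI)
    have "(\<Sum>i\<in>{1..n}. x i) = (\<Sum>i\<in>{1..n}. max 0 ((L - b i - t i)/a i))"
      by (rule sum.cong) (auto simp: x_def)
    then show "(\<Sum>i\<in>{1..n}. x i) = 1" using sum1 by simp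
  qed (auto simp: x_def)
  have wc: "a i * x i + b i + t i \<le> a j * x j + b j + t j"
    if "i \<in> {1..n}" "j \<in> {1..n}" "0 < x i" for i j
  proof -
    have "a i * x i + b i + t i = L" using cost2[of i] that by (simp add: x_def)
    also have "L \<le> a j * x j + b j + t j" using cost[of j] that by (simp add: x_def)
    finally show ?thesis .
  qed
  show ?thesis unfolding wardrop_def x_def[symmetric] using isf wc by simp
qed

lemma W2:
  assumes apos: "\<forall>i\<in>{1..n}. a i > 0" and n1: "n \<ge> 1"
    and w: "wardrop n (\<lambda>i y. a i * y + b i) t x"
  shows "\<exists>L. \<forall>j\<in>{1..n}. x j = max 0 ((L - b j - t j)/a j)"
proof -
  define C where "C = (\<lambda>j. a j * x j + b j + t j)"
  define L where "L = Min (C ` {1..n})"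
  have ne: "C ` {1..n} \<noteq> {}" using n1 by auto
  have fin: "finite (C ` {1..n})" by auto
  have Lle: "L \<le> C j" if "j \<in> {1..n}" for j unfolding L_def using that fin by auto
  have xnn: "x j \<ge> 0" if "j \<in> {1..n}" for j using w that unfolding wardrop_def is_flow_def by auto
  have ward: "\<And>i j. i\<in>{1..n} \<Longrightarrow> j\<in>{1..n} \<Longrightarrow> 0 < x i \<Longrightarrow> C i \<le> C j"
    using w unfolding wardrop_def C_def by auto
  show ?thesis
  proof (intro exI ballI)
    fix j assume j: "j \<in> {1..n}"
    have aj: "a j > 0" using apos j by auto
    show "x j = max 0 ((L - b j - t j)/a j)"
    proof (cases "x j > 0")
      case True
      have "C j \<le> L" unfolding L_def using ne fin ward[OF j _ True] by (auto simp: Min_ge_iff)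
      hence "L = C j" using Lle[OF j] by simp
      hence "(L - b j - t j)/a j = x j" using aj by (simp add: C_def)
      then show ?thesis using True by simp
    next
      case False
      hence "x j = 0" using xnn[OF j] by simp
      hence "L - b j - t j \<le> 0" using Lle[OF j] by (simp add: C_def)
      hence "(L - b j - t j)/a j \<le> 0" using aj by (simp add: divide_nonpos_pos)
      then show ?thesis using \<open>x j = 0\<close> by simp
    qed
  qed
qed

lemma W3:
  assumes apos: "\<forall>i\<in>{1..n}. a i > 0" and n1: "n \<ge> 1"
    and w: "wardrop n (\<lambda>i y. a i * y + b i) t x"
    and w': "wardrop n (\<lambda>i y. a i * y + b i) t x'"
  shows "x = x'"
proof -
  obtain L where L: "\<forall>j\<in>{1..n}. x j = max 0 ((L - b j - t j)/a j)" using W2[OF apos n1 w] by blast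
  obtain L' where L': "\<forall>j\<in>{1..n}. x' j = max 0 ((L' - b j - t j)/a j)" using W2[OF apos n1 w'] by blast
  have s: "sum x {1..n} = sum x' {1..n}" using w w' unfolding wardrop_def is_flow_def by auto
  have out: "x j = x' j" if "j \<notin> {1..n}" for j using w w' that unfolding wardrop_def is_flow_def by auto
  have mono: "max 0 ((M - b j - t j)/a j) \<le> max 0 ((M' - b j - t j)/a j)" if "M \<le> M'" "j\<in>{1..n}" for M M' j
  proof -
    have "a j > 0" using apos that by auto
    hence "(M - b j - t j)/a j \<le> (M' - b j - t j)/a j" using that by (simp add: divide_right_mono)
    thus ?thesis by simp
  qed
  have "\<forall>j\<in>{1..n}. x j = x' j"
  proof (cases "L \<le> L'")
    case True
    show ?thesis using sum_mono_inv[OF s, of ] L L' mono[OF True] by (metis finite_atLeastAtMost)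
  next
    case False
    hence "L' \<le> L" by simp
    show ?thesis using sum_mono_inv[OF s[symmetric]] L L' mono[OF \<open>L' \<le> L\<close>] by (metis finite_atLeastAtMost)
  qed
  thus ?thesis using out by (metis ext)
qed

lemma W4:
  assumes apos: "\<forall>i\<in>{1..n}. a i > 0" and n1: "n \<ge> 1"
  shows "\<exists>x. wardrop n (\<lambda>i y. a i * y + b i) t x"
proof -
  define F where "F = (\<lambda>L. \<Sum>i\<in>{1..n}. max 0 ((L - b i - t i)/a i))"
  define S where "S = (\<Sum>i\<in>{1..n}. \<bar>b i + t i\<bar>)"
  have Sge: "\<bar>b i + t i\<bar> \<le> S" if "i \<in> {1..n}" for i
    unfolding S_def by (rule member_le_sum[OF that]) auto
  have S0: "S \<ge> 0" unfolding S_def by (auto intro: sum_nonneg)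
  have F0: "F (-S - 1) = 0" unfolding F_def
  proof (intro sum.neutral ballI)
    fix i assume i: "i \<in> {1..n}"
    have "a i > 0" using apos i by auto
    have "-S - 1 - b i - t i < 0" using Sge[OF i] by linarith
    hence "(-S - 1 - b i - t i)/a i < 0" using \<open>a i > 0\<close> by (simp add: divide_neg_pos)
    thus "max 0 ((-S - 1 - b i - t i)/a i) = 0" by simp
  qed
  have one: "1 \<in> {1..n}" using n1 by auto
  have a1: "a 1 > 0" using apos one by auto
  have F1: "F (S + a 1) \<ge> 1"
  proof -
    have "(S + a 1 - b 1 - t 1)/a 1 \<ge> 1" using Sge[OF one] a1 by (simp add: le_divide_eq)
    hence "max 0 ((S + a 1 - b 1 - t 1)/a 1) \<ge> 1" by simp
    also have "max 0 ((S + a 1 - b 1 - t 1)/a 1) \<le> F (S + a 1)" unfolding F_def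
      by (rule member_le_sum[OF one]) auto
    finally show ?thesis .
  qed
  have cont: "continuous_on {-S-1..S + a 1} F" unfolding F_def
    using apos by (intro continuous_intros) force+
  obtain L where "F L = 1" using IVT'[of F "-S-1" 1 "S + a 1", OF _ F1 _ cont] F0 S0 a1 by auto
  then show ?thesis using W1[OF apos] unfolding F_def by blast
qed

lemma eqflow:
  assumes apos: "\<forall>i\<in>{1..n}. a i > 0" and n1: "n \<ge> 1"
    and w: "wardrop n (\<lambda>i y. a i * y + b i) t x"
  shows "eq_flow n (\<lambda>i y. a i * y + b i) t = x"
  unfolding eq_flow_def
proof (rule the_equality)
  show "wardrop n (\<lambda>i y. a i * y + b i) t x" by (rule w)
  fix y assume "wardrop n (\<lambda>i y. a i * y + b i) t y"
  then show "y = x" using W3[OF apos n1 w] by metis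
qed



definition clamp :: "real \<Rightarrow> real" where "clamp z = max 0 (min 1 z)"

lemma mono_path:
  fixes K :: "real set"
  assumes "finite K" "\<forall>x\<in>K. \<forall>y\<in>K. x \<noteq> y \<longrightarrow> \<bar>x - y\<bar> \<ge> 1"
  shows "\<forall>p q. p \<le> q \<longrightarrow> p - (\<Sum>x\<in>K. clamp (p - x)) \<le> q - (\<Sum>x\<in>K. clamp (q - x))"
  using assms
proof (induction K rule: finite_linorder_max_induct)
  case empty
  then show ?case by simp
next
  case (insert M K)
  have IH: "\<forall>p q. p \<le> q \<longrightarrow> p - (\<Sum>x\<in>K. clamp (p - x)) \<le> q - (\<Sum>x\<in>K. clamp (q - x))"
    using insert by auto
  have below: "x \<le> M - 1" if "x \<in> K" for x
    using insert.prems insert.hyps(2) that by fastforce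
  have notin: "M \<notin> K" using insert.hyps(2) by auto
  define f where "f = (\<lambda>p. p - (\<Sum>x\<in>K. clamp (p - x)))"
  have sumins: "(\<Sum>x\<in>insert M K. clamp (p - x)) = clamp (p - M) + (\<Sum>x\<in>K. clamp (p - x))" for p
    using insert.hyps(1) notin by simp
  have high: "f p = p - card K" if "p \<ge> M" for p
  proof -
    have "(\<Sum>x\<in>K. clamp (p - x)) = (\<Sum>x\<in>K. 1)"
    proof (intro sum.cong refl)
      fix x assume "x \<in> K"
      hence "x \<le> M - 1" by (rule below)
      hence "p - x \<ge> 1" using that by linarith
      thus "clamp (p - x) = 1" by (simp add: clamp_def)
    qed
    thus ?thesis unfolding f_def by simp
  qed
  have c1: "clamp (q - M) - clamp (p - M) \<le> q - p" if "p \<le> q" for p q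
    using that by (simp add: clamp_def)
  have lowc: "clamp (p - M) = 0" if "p \<le> M" for p using that by (simp add: clamp_def)
  have case2: "f p - clamp (p - M) \<le> f q - clamp (q - M)" if "M \<le> p" "p \<le> q" for p q
    using high[of p] high[of q] c1[of p q] that by simp
  show ?case
  proof (intro allI impI)
    fix p q :: real assume pq: "p \<le> q"
    have goal: "f p - clamp (p - M) \<le> f q - clamp (q - M)"
    proof (cases "q \<le> M")
      case True
      then show ?thesis using IH pq lowc[of p] lowc[of q] unfolding f_def by auto
    next
      case False
      show ?thesis
      proof (cases "M \<le> p")
        case True
        then show ?thesis using case2 pq by blast
      next
        case False
        have "f p \<le> f M" using IH False unfolding f_def by auto
        moreover have "f M - clamp (M - M) \<le> f q - clamp (q - M)" using case2[of M q] \<open>\<not> q \<le> M\<close> by auto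
        ultimately show ?thesis using lowc[of p] lowc[of M] False by simp
      qed
    qed
    then show "p - (\<Sum>x\<in>insert M K. clamp (p - x)) \<le> q - (\<Sum>x\<in>insert M K. clamp (q - x))"
      unfolding sumins f_def by simp
  qed
qed

definition Bset :: "nat \<Rightarrow> (nat \<Rightarrow> real) \<Rightarrow> nat \<Rightarrow> nat set" where
  "Bset n b j = {k\<in>{1..n}. b k < b j \<or> (b k = b j \<and> k < j)}"
definition TT :: "nat \<Rightarrow> (nat \<Rightarrow> real) \<Rightarrow> nat \<Rightarrow> real" where
  "TT n b j = b j + real (card (Bset n b j))"
definition LL :: "nat \<Rightarrow> (nat \<Rightarrow> real) \<Rightarrow> real \<Rightarrow> real" where
  "LL n b p = p - (\<Sum>k\<in>{1..n}. clamp (p - TT n b k))"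

lemma Bset_fin: "finite (Bset n b j)" unfolding Bset_def by auto
lemma Bset_sub: "Bset n b j \<subseteq> {1..n}" unfolding Bset_def by auto

lemma before:
  assumes "k \<in> Bset n b j"
  shows "TT n b k \<le> TT n b j - 1"
proof -
  have sub: "Bset n b k \<subseteq> Bset n b j" using assms unfolding Bset_def by auto
  have "k \<in> Bset n b j" "k \<notin> Bset n b k" using assms unfolding Bset_def by auto
  hence "Bset n b k \<subset> Bset n b j" using sub by blast
  hence "card (Bset n b k) < card (Bset n b j)" using Bset_fin by (rule psubset_card_mono[rotated])
  moreover have "b k \<le> b j" using assms unfolding Bset_def by auto
  ultimately show ?thesis unfolding TT_def by simp
qed

lemma trich:
  assumes "j \<in> {1..n}" "k \<in> {1..n}" "j \<noteq> k"
  shows "k \<in> Bset n b j \<or> j \<in> Bset n b k"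
  using assms unfolding Bset_def by (auto simp: not_less_iff_gr_or_eq)

lemma gap:
  assumes "j \<in> {1..n}" "k \<in> {1..n}" "j \<noteq> k"
  shows "\<bar>TT n b j - TT n b k\<bar> \<ge> 1"
proof -
  have "k \<in> Bset n b j \<or> j \<in> Bset n b k" by (rule trich[OF assms])
  then show ?thesis
  proof
    assume "k \<in> Bset n b j" then have "TT n b k \<le> TT n b j - 1" by (rule before)
    then show ?thesis by linarith
  next
    assume "j \<in> Bset n b k" then have "TT n b j \<le> TT n b k - 1" by (rule before)
    then show ?thesis by linarith
  qed
qed

lemma TT_inj: "inj_on (TT n b) {1..n}"
proof (rule inj_onI)
  fix j k assume "j \<in> {1..n}" "k \<in> {1..n}" "TT n b j = TT n b k"
  then show "j = k" using gap[of j n k b] by (cases "j = k") auto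
qed

lemma LL_mono:
  assumes "p \<le> q" shows "LL n b p \<le> LL n b q"
proof -
  have K: "\<forall>x\<in>TT n b ` {1..n}. \<forall>y\<in>TT n b ` {1..n}. x \<noteq> y \<longrightarrow> \<bar>x - y\<bar> \<ge> 1"
  proof (intro ballI impI)
    fix x y assume "x \<in> TT n b ` {1..n}" "y \<in> TT n b ` {1..n}" "x \<noteq> y"
    then obtain j k where "j \<in> {1..n}" "k \<in> {1..n}" "x = TT n b j" "y = TT n b k" by auto
    then show "\<bar>x - y\<bar> \<ge> 1" using gap[of j n k b] \<open>x \<noteq> y\<close> by (cases "j = k") auto
  qed
  have re: "(\<Sum>k\<in>{1..n}. clamp (r - TT n b k)) = (\<Sum>x\<in>TT n b ` {1..n}. clamp (r - x))" for r
    using sum.reindex[OF TT_inj, of "\<lambda>x. clamp (r - x)" n b] by (simp add: comp_def)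
  show ?thesis unfolding LL_def re using mono_path[OF _ K] assms by blast
qed

lemma sum_ind: "finite A \<Longrightarrow> B \<subseteq> A \<Longrightarrow> (\<Sum>k\<in>A. if k \<in> B then 1 else (0::real)) = real (card B)"
  by (simp add: sum.If_cases Int_absorb1 Int_absorb2)

lemma LL_at:
  assumes j: "j \<in> {1..n}"
  shows "LL n b (TT n b j) = b j" "LL n b (TT n b j + 1) = b j"
proof -
  have jB: "j \<notin> Bset n b j" unfolding Bset_def by auto
  have s1: "(\<Sum>k\<in>{1..n}. clamp (TT n b j - TT n b k)) = (\<Sum>k\<in>{1..n}. if k \<in> Bset n b j then 1 else 0)"
  proof (intro sum.cong refl)
    fix k assume k: "k \<in> {1..n}"
    show "clamp (TT n b j - TT n b k) = (if k \<in> Bset n b j then 1 else 0)"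
    proof (cases "k \<in> Bset n b j")
      case True then show ?thesis using before[OF True] by (simp add: clamp_def)
    next
      case False
      show ?thesis
      proof (cases "k = j")
        case True then show ?thesis using False by (simp add: clamp_def)
      next
        case ne: False
        hence "j \<in> Bset n b k" using trich[OF j k] False by auto
        then show ?thesis using before[of j n b k] False by (simp add: clamp_def)
      qed
    qed
  qed
  have s2: "(\<Sum>k\<in>{1..n}. clamp (TT n b j + 1 - TT n b k)) = (\<Sum>k\<in>{1..n}. if k \<in> insert j (Bset n b j) then 1 else 0)"
  proof (intro sum.cong refl)
    fix k assume k: "k \<in> {1..n}"
    show "clamp (TT n b j + 1 - TT n b k) = (if k \<in> insert j (Bset n b j) then 1 else 0)"
    proof (cases "k \<in> Bset n b j")
      case True then show ?thesis using before[OF True] by (simp add: clamp_def)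
    next
      case False
      show ?thesis
      proof (cases "k = j")
        case True then show ?thesis using False by (simp add: clamp_def)
      next
        case ne: False
        hence "j \<in> Bset n b k" using trich[OF j k] False by auto
        then show ?thesis using before[of j n b k] False ne by (simp add: clamp_def)
      qed
    qed
  qed
  have c2: "card (insert j (Bset n b j)) = card (Bset n b j) + 1" using jB Bset_fin by simp
  show "LL n b (TT n b j) = b j" unfolding LL_def s1
    using sum_ind[OF _ Bset_sub] by (simp add: TT_def)
  show "LL n b (TT n b j + 1) = b j" unfolding LL_def
    using s2 sum_ind[of "{1..n}" "insert j (Bset n b j)"] Bset_sub[of n b j] j c2 by (simp add: TT_def)
qed

lemma K1:
  assumes j: "j \<in> {1..n}" and lt: "b j < LL n b p"
  shows "clamp (p - TT n b j) = 1"
proof -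
  have "\<not> p \<le> TT n b j + 1" using LL_mono[of p "TT n b j + 1" n b] LL_at(2)[OF j] lt by auto
  thus ?thesis by (simp add: clamp_def)
qed

lemma K2:
  assumes j: "j \<in> {1..n}" and lt: "LL n b p < b j"
  shows "clamp (p - TT n b j) = 0"
proof -
  have "\<not> TT n b j \<le> p" using LL_mono[of "TT n b j" p n b] LL_at(1)[OF j] lt by auto
  thus ?thesis by (simp add: clamp_def)
qed

lemma TT_bounds:
  assumes "j \<in> {1..n}" "b j \<ge> 0"
  shows "TT n b j \<ge> 0" "TT n b j \<le> b j + n"
proof -
  show "TT n b j \<ge> 0" using assms unfolding TT_def by simp
  have "card (Bset n b j) \<le> card {1..n}" by (rule card_mono[OF _ Bset_sub]) auto
  thus "TT n b j \<le> b j + n" unfolding TT_def by simp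
qed

lemma LL0:
  assumes "\<forall>j\<in>{1..n}. b j \<ge> 0"
  shows "LL n b 0 = 0"
proof -
  have "(\<Sum>k\<in>{1..n}. clamp (0 - TT n b k)) = 0"
  proof (intro sum.neutral ballI)
    fix k assume k: "k \<in> {1..n}"
    have "TT n b k \<ge> 0" using TT_bounds(1)[OF k] assms k by auto
    then show "clamp (0 - TT n b k) = 0" by (simp add: clamp_def)
  qed
  thus ?thesis unfolding LL_def by simp
qed

lemma LLbig:
  assumes "\<forall>k\<in>{1..n}. p \<ge> TT n b k + 1"
  shows "LL n b p = p - n"
proof -
  have "(\<Sum>k\<in>{1..n}. clamp (p - TT n b k)) = (\<Sum>k\<in>{1..n}. 1)"
  proof (intro sum.cong refl)
    fix k assume k: "k \<in> {1..n}"
    have "p \<ge> TT n b k + 1" using assms k by blast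
    hence "p - TT n b k \<ge> 1" by linarith
    then show "clamp (p - TT n b k) = 1" by (simp add: clamp_def)
  qed
  thus ?thesis unfolding LL_def by simp
qed

lemma term_sub:
  fixes a C L L' w :: real
  assumes a: "a > 0" and w: "0 \<le> w" "w \<le> 1" and w1: "C < L \<longrightarrow> w = 1" and w0: "C > L \<longrightarrow> w = 0"
  shows "max 0 ((L - C)/a) + w / a * (L' - L) \<le> max 0 ((L' - C)/a)"
proof -
  consider "C < L" | "C > L" | "C = L" by linarith
  then show ?thesis
  proof cases
    case 1
    hence "w = 1" using w1 by simp
    have "(L - C)/a > 0" using 1 a by simp
    hence "max 0 ((L - C)/a) + w / a * (L' - L) = (L' - C)/a" using \<open>w = 1\<close> a by (simp add: field_simps)
    then show ?thesis by simp
  next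
    case 2
    hence "w = 0" using w0 by simp
    have "(L - C)/a < 0" using 2 a by (simp add: divide_neg_pos)
    then show ?thesis using \<open>w = 0\<close> by simp
  next
    case 3
    define z where "z = (L' - L)/a"
    have e: "w / a * (L' - L) = w * z" unfolding z_def by simp
    have "w * z \<le> max 0 z"
    proof (cases "z \<ge> 0")
      case True then show ?thesis using w mult_left_le_one_le[of z w] by (simp add: mult.commute)
    next
      case False then show ?thesis using w by (simp add: mult_nonneg_nonpos)
    qed
    then show ?thesis using 3 e unfolding z_def by simp
  qed
qed

lemma dev:
  fixes N :: "nat set" and a b t t' x x' w :: "nat \<Rightarrow> real" and L L' c \<sigma> :: real
  assumes fin: "finite N" and i: "i \<in> N" and apos: "\<forall>j\<in>N. a j > 0"
    and hx: "\<forall>j\<in>N. x j = max 0 ((L - b j - t j)/a j)" and sx: "sum x N = 1"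
    and hx': "\<forall>j\<in>N. x' j = max 0 ((L' - b j - t' j)/a j)" and sx': "sum x' N = 1"
    and same: "\<forall>j\<in>N. j \<noteq> i \<longrightarrow> t' j = t j"
    and tau: "0 \<le> t' i" "t' i \<le> c"
    and hw: "\<forall>j\<in>N. 0 \<le> w j \<and> w j \<le> 1 \<and> (b j + t j < L \<longrightarrow> w j = 1) \<and> (b j + t j > L \<longrightarrow> w j = 0)"
    and sg: "\<sigma> = (\<Sum>j\<in>N-{i}. w j / a j)"
    and tnn: "0 \<le> t i"
    and low: "L < b i \<longrightarrow> t i = 0"
    and high: "L \<ge> b i \<longrightarrow> t i \<le> L - b i \<and>
       (\<sigma> * t i = x i * (1 + a i * \<sigma>) \<or> (t i = c \<and> \<sigma> * c \<le> x i * (1 + a i * \<sigma>)))"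
  shows "t' i * x' i \<le> t i * x i"
proof -
  have sgnn: "\<sigma> \<ge> 0" unfolding sg using apos hw by (intro sum_nonneg) auto
  have ai: "a i > 0" using apos i by auto
  have y: "x i = 1 - sum x (N - {i})" using sum.remove[OF fin i, of x] sx by simp
  have y': "x' i = 1 - sum x' (N - {i})" using sum.remove[OF fin i, of x'] sx' by simp
  have tsum: "(\<Sum>j\<in>N-{i}. x j + w j / a j * (L' - L)) \<le> sum x' (N - {i})"
  proof (rule sum_mono)
    fix j assume j: "j \<in> N - {i}"
    have "max 0 ((L - (b j + t j))/a j) + w j / a j * (L' - L) \<le> max 0 ((L' - (b j + t j))/a j)"
      using j apos hw by (intro term_sub) auto
    then show "x j + w j / a j * (L' - L) \<le> x' j" using hx hx' same j by (simp add: algebra_simps)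
  qed
  have "(\<Sum>j\<in>N-{i}. x j + w j / a j * (L' - L)) = sum x (N - {i}) + \<sigma> * (L' - L)"
    unfolding sg by (simp add: sum.distrib sum_distrib_right)
  hence ineq: "x' i \<le> x i - \<sigma> * (L' - L)" using tsum y y' by linarith
  have ynn: "x i \<ge> 0" "x' i \<ge> 0" using hx hx' i by auto
  show ?thesis
  proof (cases "x' i > 0")
    case False
    hence "x' i = 0" using ynn by simp
    then show ?thesis using tnn ynn by simp
  next
    case True
    have "x' i = (L' - b i - t' i)/a i" using hx' i True by (auto simp: max_def split: if_splits)
    hence L': "L' = a i * x' i + b i + t' i" using ai by (simp add: field_simps)
    show ?thesis
    proof (cases "L < b i")
      case True
      have "(L - b i - t i)/a i < 0" using True low ai by (simp add: divide_neg_pos)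
      hence "x i = 0" using hx i by simp
      have "L' - L > 0" using L' True ai ynn tau by (smt (verit) mult_nonneg_nonneg)
      hence "\<sigma> * (L' - L) \<ge> 0" using sgnn by simp
      then show ?thesis using ineq \<open>x i = 0\<close> \<open>x' i > 0\<close> by linarith
    next
      case False
      hence h: "t i \<le> L - b i" and
        hh: "\<sigma> * t i = x i * (1 + a i * \<sigma>) \<or> (t i = c \<and> \<sigma> * c \<le> x i * (1 + a i * \<sigma>))"
        using high by auto
      have "(L - b i - t i)/a i \<ge> 0" using h ai by simp
      hence "x i = (L - b i - t i)/a i" using hx i by simp
      hence L: "L = a i * x i + b i + t i" using ai by (simp add: field_simps)
      define A where "A = 1 + a i * \<sigma>"
      have Apos: "A > 0" unfolding A_def using ai sgnn by (simp add: add_pos_nonneg)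
      have key: "A * x' i \<le> A * x i - \<sigma> * (t' i - t i)"
        using ineq unfolding A_def L L' by (simp add: algebra_simps)
      have key2: "A * (t' i * x' i) \<le> t' i * (A * x i - \<sigma> * (t' i - t i))"
        using mult_left_mono[OF key tau(1)] by (simp add: algebra_simps)
      have "t' i * (A * x i - \<sigma> * (t' i - t i)) \<le> A * (t i * x i)"
        using hh
      proof
        assume e: "\<sigma> * t i = x i * (1 + a i * \<sigma>)"
        have Ax: "A * x i = \<sigma> * t i" using e unfolding A_def by (simp add: algebra_simps)
        have "A * (t i * x i) - t' i * (A * x i - \<sigma> * (t' i - t i))
            = t i * (A * x i) - t' i * (A * x i - \<sigma> * (t' i - t i))" by (simp add: algebra_simps)
        also have "\<dots> = \<sigma> * (t i - t' i)^2" unfolding Ax by (simp add: algebra_simps power2_eq_square)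
        finally have "A * (t i * x i) - t' i * (A * x i - \<sigma> * (t' i - t i)) = \<sigma> * (t i - t' i)^2" .
        moreover have "\<sigma> * (t i - t' i)^2 \<ge> 0" using sgnn by simp
        ultimately show ?thesis by linarith
      next
        assume e: "t i = c \<and> \<sigma> * c \<le> x i * (1 + a i * \<sigma>)"
        have "A * (t i * x i) - t' i * (A * x i - \<sigma> * (t' i - t i)) = (c - t' i) * (A * x i - \<sigma> * t' i)"
          using e unfolding A_def by (simp add: algebra_simps)
        moreover have "\<sigma> * t' i \<le> \<sigma> * c" using sgnn tau by (simp add: mult_left_mono)
        hence "(c - t' i) * (A * x i - \<sigma> * t' i) \<ge> 0" using e tau unfolding A_def
          by (intro mult_nonneg_nonneg) (auto simp: algebra_simps)
        ultimately show ?thesis by linarith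
      qed
      hence "A * (t' i * x' i) \<le> A * (t i * x i)" using key2 by linarith
      then show ?thesis using Apos by simp
    qed
  qed
qed

lemma tol_facts:
  fixes a \<sigma> L bi c T0 tq y :: real
  assumes a: "a > 0" and sg: "\<sigma> \<ge> 0" and c: "c \<ge> 0"
  and T0_def: "T0 = (L - bi) * (a * \<sigma> + 1) / (2 * a * \<sigma> + 1)"
  and tq_def: "tq = max 0 (min c T0)"
  and y_def: "y = max 0 ((L - bi - tq)/a)"
  shows "0 \<le> tq" "tq \<le> c" "L < bi \<longrightarrow> tq = 0"
    "L \<ge> bi \<longrightarrow> tq \<le> L - bi \<and> (\<sigma> * tq = y * (1 + a * \<sigma>) \<or> (tq = c \<and> \<sigma> * c \<le> y * (1 + a * \<sigma>)))"
proof -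
  define D where "D = 2 * a * \<sigma> + 1"
  have asg: "0 \<le> a * \<sigma>" using a sg by simp
  have Dpos: "D > 0" unfolding D_def using asg by linarith
  have T0D: "T0 * D = (L - bi) * (a * \<sigma> + 1)" unfolding T0_def D_def[symmetric] using Dpos by simp
  show "0 \<le> tq" unfolding tq_def by simp
  show "tq \<le> c" unfolding tq_def using c by simp
  show "L < bi \<longrightarrow> tq = 0"
  proof
    assume "L < bi"
    hence "(L - bi) * (a * \<sigma> + 1) < 0" using asg by (intro mult_neg_pos) auto
    hence "T0 < 0" using T0D Dpos by (smt (verit) mult_nonneg_nonneg)
    thus "tq = 0" unfolding tq_def by simp
  qed
  show "L \<ge> bi \<longrightarrow> tq \<le> L - bi \<and> (\<sigma> * tq = y * (1 + a * \<sigma>) \<or> (tq = c \<and> \<sigma> * c \<le> y * (1 + a * \<sigma>)))"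
  proof
    assume Lb: "L \<ge> bi"
    define d where "d = L - bi"
    have d0: "d \<ge> 0" using Lb d_def by simp
    have "T0 * D \<ge> 0" using T0D d0 a sg unfolding d_def[symmetric] by simp
    hence T0nn: "T0 \<ge> 0" using Dpos by (simp add: zero_le_mult_iff)
    have "d * (a * \<sigma> + 1) \<le> d * D" unfolding D_def using d0 asg by (intro mult_left_mono) (auto simp: mult.commute)
    hence "T0 * D \<le> d * D" using T0D unfolding d_def by simp
    hence T0d: "T0 \<le> d" using Dpos by simp
    have tld: "tq \<le> L - bi" unfolding tq_def using T0d T0nn c d_def by simp
    have yv: "y = (L - bi - tq)/a" unfolding y_def using tld a by simp
    hence ay: "a * y = d - tq" using a d_def by simp
    have "\<sigma> * tq = y * (1 + a * \<sigma>) \<or> (tq = c \<and> \<sigma> * c \<le> y * (1 + a * \<sigma>))"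
    proof (cases "T0 \<le> c")
      case True
      hence tq: "tq = T0" unfolding tq_def using T0nn by simp
      have "a * (\<sigma> * tq) = a * (y * (1 + a * \<sigma>))"
      proof -
        have "a * (y * (1 + a * \<sigma>)) = (a * y) * (1 + a * \<sigma>)" by (simp add: algebra_simps)
        also have "\<dots> = (d - T0) * (1 + a * \<sigma>)" using ay tq by simp
        also have "\<dots> = d * (a * \<sigma> + 1) - T0 * (1 + a * \<sigma>)" by (simp add: algebra_simps)
        also have "\<dots> = T0 * D - T0 * (1 + a * \<sigma>)" using T0D d_def by simp
        also have "\<dots> = a * (\<sigma> * tq)" unfolding D_def tq by (simp add: algebra_simps)
        finally show ?thesis by (simp only: eq_commute)
      qed
      hence "\<sigma> * tq = y * (1 + a * \<sigma>)" using a by simp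
      then show ?thesis by simp
    next
      case False
      hence tq: "tq = c" unfolding tq_def using c by simp
      have "c * D \<le> T0 * D" using False Dpos by simp
      have "a * (y * (1 + a * \<sigma>)) = (a * y) * (1 + a * \<sigma>)" by (simp add: algebra_simps)
      also have "\<dots> = (d - c) * (1 + a * \<sigma>)" using ay tq by simp
      also have "\<dots> = d * (a * \<sigma> + 1) - c * (1 + a * \<sigma>)" by (simp add: algebra_simps)
      also have "\<dots> = T0 * D - c * (1 + a * \<sigma>)" using T0D d_def by simp
      also have "\<dots> \<ge> c * D - c * (1 + a * \<sigma>)" using \<open>c * D \<le> T0 * D\<close> by simp
      also have "c * D - c * (1 + a * \<sigma>) = a * (\<sigma> * c)" unfolding D_def by (simp add: algebra_simps)
      finally have "a * (\<sigma> * c) \<le> a * (y * (1 + a * \<sigma>))" .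
      hence "\<sigma> * c \<le> y * (1 + a * \<sigma>)" using a by simp
      then show ?thesis using tq by simp
    qed
    then show "tq \<le> L - bi \<and> (\<sigma> * tq = y * (1 + a * \<sigma>) \<or> (tq = c \<and> \<sigma> * c \<le> y * (1 + a * \<sigma>)))"
      using tld by simp
  qed
qed

definition sgm :: "nat \<Rightarrow> (nat \<Rightarrow> real) \<Rightarrow> (nat \<Rightarrow> real) \<Rightarrow> real \<Rightarrow> nat \<Rightarrow> real" where
  "sgm n a b p i = (\<Sum>j\<in>{1..n}-{i}. clamp (p - TT n b j) / a j)"
definition tolf :: "nat \<Rightarrow> (nat \<Rightarrow> real) \<Rightarrow> (nat \<Rightarrow> real) \<Rightarrow> real \<Rightarrow> real \<Rightarrow> nat \<Rightarrow> real" where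
  "tolf n a b c p i = max 0 (min c ((LL n b p - b i) * (a i * sgm n a b p i + 1) / (2 * a i * sgm n a b p i + 1)))"
definition Phi :: "nat \<Rightarrow> (nat \<Rightarrow> real) \<Rightarrow> (nat \<Rightarrow> real) \<Rightarrow> real \<Rightarrow> real \<Rightarrow> real" where
  "Phi n a b c p = (\<Sum>i\<in>{1..n}. max 0 ((LL n b p - b i - tolf n a b c p i)/a i))"

lemma clamp_bounds: "0 \<le> clamp z" "clamp z \<le> 1" unfolding clamp_def by auto

lemma sgm_nn: assumes "\<forall>j\<in>{1..n}. a j > 0" shows "sgm n a b p i \<ge> 0"
  unfolding sgm_def
proof (intro sum_nonneg)
  fix j assume "j \<in> {1..n} - {i}"
  hence "a j > 0" using assms by auto
  thus "0 \<le> clamp (p - TT n b j) / a j" using clamp_bounds(1) by simp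
qed

lemma Phi_cont:
  assumes apos: "\<forall>j\<in>{1..n}. a j > 0"
  shows "continuous_on S (Phi n a b c)"
proof -
  have ne: "2 * a i * sgm n a b p i + 1 \<noteq> 0" if "i \<in> {1..n}" for i p
  proof -
    have "a i > 0" using apos that by auto
    hence "0 \<le> a i * sgm n a b p i" using sgm_nn[OF apos] by simp
    thus ?thesis by linarith
  qed
  show ?thesis
    unfolding Phi_def tolf_def sgm_def[symmetric] LL_def clamp_def
    using apos ne unfolding sgm_def clamp_def
    by (intro continuous_intros) force+
qed

theorem mainTheorem1:
  fixes n :: nat and a b :: "nat \<Rightarrow> real" and c :: real
  assumes "n \<ge> 2"
    and "\<forall>i\<in>{1..n}. a i > 0"
    and "\<forall>i\<in>{1..n}. b i \<ge> 0"
    and "c \<ge> 0"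
  shows "capped_spne_set n (\<lambda>i y. a i * y + b i) c \<noteq> {}"
proof -
  note apos = assms(2) and bnn = assms(3) and c0 = assms(4)
  have n1: "n \<ge> 1" using assms(1) by simp
  define N where "N = {1..n}"
  have one: "1 \<in> {1..n}" using n1 by auto
  have a1: "a 1 > 0" using apos one by auto
  define B where "B = (\<Sum>j\<in>{1..n}. b j)"
  have bB: "b j \<le> B" if "j \<in> {1..n}" for j
    unfolding B_def by (rule member_le_sum[OF that]) (use bnn in auto)
  define p1 where "p1 = B + 2 * real n + 1 + c + a 1"
  have TTp1: "\<forall>k\<in>{1..n}. p1 \<ge> TT n b k + 1"
  proof
    fix k assume k: "k \<in> {1..n}"
    have "TT n b k \<le> b k + n" using TT_bounds(2)[OF k] bnn k by auto
    thus "p1 \<ge> TT n b k + 1" using bB[OF k] a1 c0 unfolding p1_def by linarith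
  qed
  have LLp1: "LL n b p1 = p1 - n" by (rule LLbig[OF TTp1])
  have tolle: "tolf n a b c p i \<le> c" for p i unfolding tolf_def using c0 by simp
  have tolnn: "tolf n a b c p i \<ge> 0" for p i unfolding tolf_def by simp
  have Phi1: "Phi n a b c p1 \<ge> 1"
  proof -
    have "(p1 - n - b 1 - c) \<ge> a 1" using bB[OF one] unfolding p1_def by simp
    hence "(LL n b p1 - b 1 - tolf n a b c p1 1) \<ge> a 1" using LLp1 tolle[of p1 1] by simp
    hence "(LL n b p1 - b 1 - tolf n a b c p1 1)/a 1 \<ge> 1" using a1 by (simp add: le_divide_eq)
    hence "max 0 ((LL n b p1 - b 1 - tolf n a b c p1 1)/a 1) \<ge> 1" by simp
    also have "max 0 ((LL n b p1 - b 1 - tolf n a b c p1 1)/a 1) \<le> Phi n a b c p1"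
      unfolding Phi_def by (rule member_le_sum[OF one]) auto
    finally show ?thesis .
  qed
  have Phi0: "Phi n a b c 0 = 0"
    unfolding Phi_def
  proof (intro sum.neutral ballI)
    fix i assume i: "i \<in> {1..n}"
    have "LL n b 0 - b i - tolf n a b c 0 i \<le> 0" using LL0[OF bnn] bnn i tolnn[of 0 i] by force
    hence "(LL n b 0 - b i - tolf n a b c 0 i) / a i \<le> 0" using apos i by (simp add: divide_nonpos_pos)
    thus "max 0 ((LL n b 0 - b i - tolf n a b c 0 i) / a i) = 0" by simp
  qed
  have p1nn: "p1 \<ge> 0"
  proof -
    have "TT n b 1 \<ge> 0" using TT_bounds(1)[OF one] bnn one by blast
    moreover have "p1 \<ge> TT n b 1 + 1" using TTp1 one by blast
    ultimately show ?thesis by linarith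
  qed
  obtain ps where ps: "Phi n a b c ps = 1"
    using IVT'[of "Phi n a b c" 0 1 p1, OF _ Phi1 p1nn Phi_cont[OF apos]] Phi0 by auto
  define L where "L = LL n b ps"
  define t where "t = tolf n a b c ps"
  define x where "x = (\<lambda>i. if i\<in>{1..n} then max 0 ((L - b i - t i)/a i) else 0)"
  have sumL: "(\<Sum>i\<in>{1..n}. max 0 ((L - b i - t i)/a i)) = 1" using ps unfolding Phi_def L_def t_def .
  have wx: "wardrop n (\<lambda>i y. a i * y + b i) t x" unfolding x_def by (rule W1[OF apos sumL])
  have efx: "eq_flow n (\<lambda>i y. a i * y + b i) t = x" by (rule eqflow[OF apos n1 wx])
  have tf: "0 \<le> t i \<and> t i \<le> c \<and> (L < b i \<longrightarrow> t i = 0) \<and>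
     (L \<ge> b i \<longrightarrow> t i \<le> L - b i \<and> (sgm n a b ps i * t i = x i * (1 + a i * sgm n a b ps i) \<or>
        (t i = c \<and> sgm n a b ps i * c \<le> x i * (1 + a i * sgm n a b ps i))))" if i: "i \<in> {1..n}" for i
  proof -
    have ai: "a i > 0" using apos i by auto
    have xi: "x i = max 0 ((L - b i - t i)/a i)" using i unfolding x_def by simp
    have ti: "t i = max 0 (min c ((L - b i) * (a i * sgm n a b ps i + 1) / (2 * a i * sgm n a b ps i + 1)))"
      unfolding t_def tolf_def L_def by simp
    show ?thesis using tol_facts[OF ai sgm_nn[OF apos] c0 refl ti xi] by blast
  qed
  have "t \<in> capped_spne_set n (\<lambda>i y. a i * y + b i) c"
    unfolding capped_spne_set_def capped_spne_def mem_Collect_eq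
  proof (intro conjI ballI)
    fix i assume "i \<in> {1..n}" then show "0 \<le> t i" "t i \<le> c" using tf by auto
  next
    fix i tau assume i: "i \<in> {1..n}" and tau: "tau \<in> {0..c}"
    define t' where "t' = t(i := tau)"
    obtain x' where wx': "wardrop n (\<lambda>i y. a i * y + b i) t' x'" using W4[OF apos n1] by blast
    have efx': "eq_flow n (\<lambda>i y. a i * y + b i) t' = x'" by (rule eqflow[OF apos n1 wx'])
    obtain L' where L': "\<forall>j\<in>{1..n}. x' j = max 0 ((L' - b j - t' j)/a j)" using W2[OF apos n1 wx'] by blast
    have sx: "sum x {1..n} = 1" and sx': "sum x' {1..n} = 1"
      using wx wx' unfolding wardrop_def is_flow_def by auto
    have hx: "\<forall>j\<in>{1..n}. x j = max 0 ((L - b j - t j)/a j)" unfolding x_def by simp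
    have hw: "\<forall>j\<in>{1..n}. 0 \<le> clamp (ps - TT n b j) \<and> clamp (ps - TT n b j) \<le> 1 \<and>
       (b j + t j < L \<longrightarrow> clamp (ps - TT n b j) = 1) \<and> (b j + t j > L \<longrightarrow> clamp (ps - TT n b j) = 0)"
    proof
      fix j assume j: "j \<in> {1..n}"
      have r1: "b j + t j < L \<longrightarrow> clamp (ps - TT n b j) = 1"
      proof
        assume "b j + t j < L"
        hence "b j < LL n b ps" using tf[OF j] L_def by linarith
        thus "clamp (ps - TT n b j) = 1" by (rule K1[OF j])
      qed
      have r2: "b j + t j > L \<longrightarrow> clamp (ps - TT n b j) = 0"
      proof
        assume h: "b j + t j > L"
        have "\<not> L \<ge> b j" using tf[OF j] h by auto
        hence "LL n b ps < b j" using L_def by simp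
        thus "clamp (ps - TT n b j) = 0" by (rule K2[OF j])
      qed
      show "0 \<le> clamp (ps - TT n b j) \<and> clamp (ps - TT n b j) \<le> 1 \<and>
       (b j + t j < L \<longrightarrow> clamp (ps - TT n b j) = 1) \<and> (b j + t j > L \<longrightarrow> clamp (ps - TT n b j) = 0)"
        using clamp_bounds r1 r2 by blast
    qed
    have "t' i * x' i \<le> t i * x i"
    proof (rule dev[where w = "\<lambda>j. clamp (ps - TT n b j)" and \<sigma> = "sgm n a b ps i" and c = c])
      show "finite {1..n}" by simp
      show "i \<in> {1..n}" by (rule i)
      show "\<forall>j\<in>{1..n}. a j > 0" by (rule apos)
      show "\<forall>j\<in>{1..n}. x j = max 0 ((L - b j - t j)/a j)" by (rule hx)
      show "sum x {1..n} = 1" by (rule sx)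
      show "\<forall>j\<in>{1..n}. x' j = max 0 ((L' - b j - t' j)/a j)" by (rule L')
      show "sum x' {1..n} = 1" by (rule sx')
      show "\<forall>j\<in>{1..n}. j \<noteq> i \<longrightarrow> t' j = t j" unfolding t'_def by simp
      show "0 \<le> t' i" "t' i \<le> c" using tau unfolding t'_def by auto
      show "\<forall>j\<in>{1..n}. 0 \<le> clamp (ps - TT n b j) \<and> clamp (ps - TT n b j) \<le> 1 \<and>
       (b j + t j < L \<longrightarrow> clamp (ps - TT n b j) = 1) \<and> (b j + t j > L \<longrightarrow> clamp (ps - TT n b j) = 0)" by (rule hw)
      show "sgm n a b ps i = (\<Sum>j\<in>{1..n}-{i}. clamp (ps - TT n b j) / a j)" unfolding sgm_def ..
      show "0 \<le> t i" "L < b i \<longrightarrow> t i = 0"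
        "L \<ge> b i \<longrightarrow> t i \<le> L - b i \<and> (sgm n a b ps i * t i = x i * (1 + a i * sgm n a b ps i) \<or>
        (t i = c \<and> sgm n a b ps i * c \<le> x i * (1 + a i * sgm n a b ps i)))" using tf[OF i] by auto
    qed
    then show "profit n (\<lambda>i y. a i * y + b i) (t(i := tau)) i \<le> profit n (\<lambda>i y. a i * y + b i) t i"
      unfolding profit_def t'_def[symmetric] efx efx' by (simp add: t'_def)
  qed
  then show ?thesis by blast
qed

end
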